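(* Let $E,F$ be Banach spaces, $a\in E$, $1\le p<\infty$, and let $f:E\rightarrow F$ be almost $p$-summing at $a$. Then for every unconditionally $p$-summable sequence $(x_{j})_{j=1}^{\infty}$ in $E$, the sequence $(f(a+x_{j})-f(a))_{j=1}^{\infty}$ is almost unconditionally summable in $F$.
   Context: $(r_j)_{j\ge1}$ are the Rademacher functions on $[0,1]$. For a sequence $(x_j)$ in $E$, $\Vert(x_{j})_{j}\Vert_{w,p}:=\sup_{\varphi\in B_{E'}}(\sum_{j}|\varphi(x_{j})|^{p})^{1/p}$; $(x_j)_{j=1}^\infty$ is unconditionally $p$-summable if this is finite and $\lim_{m\to\infty}\Vert(x_{j})_{j=m}^{\infty}\Vert_{w,p}=0$. A sequence $(y_j)$ in $F$ is almost unconditionally summable if $\sum_{j=1}^{\infty}r_{j}(t)y_{j}$ converges in $L_{2}([0,1],F)$ (equivalently in $L_s([0,1],F)$ for some/all $0<s<\infty$). A mapping $f:E\to F$ is almost $p$-summing at $a$ if there exist $C_a,\epsilon_a,r_a>0$ such that $(\int_{0}^{1}\Vert\sum_{j=1}^{k}(f(a+x_{j})-f(a))r_{j}(t)\Vert^{2}dt)^{1/2}\leq C_{a}\Vert(x_{j})_{j=1}^{k}\Vert_{w,p}^{r_{a}}$ for every $k$ and all $x_1,\dots,x_k\in E$ with $\Vert(x_{j})_{j=1}^{k}\Vert_{w,p}<\epsilon_{a}$. *)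

theory Defs
  imports "HOL-Analysis.Analysis"
begin

definition rademacher :: "nat \<Rightarrow> real \<Rightarrow> real" where
  "rademacher j t = sgn (sin (2 ^ j * pi * t))"

definition dual_ball :: "('a::real_normed_vector \<Rightarrow> real) set" where
  "dual_ball = {\<phi>. bounded_linear \<phi> \<and> onorm \<phi> \<le> 1}"

text \<open>Weak p-norm of a finite family x_1,...,x_k (here x 0, ..., x (k-1)).\<close>
definition wnorm_fin :: "real \<Rightarrow> (nat \<Rightarrow> 'a::real_normed_vector) \<Rightarrow> nat \<Rightarrow> real" where
  "wnorm_fin p x k = (SUP \<phi>\<in>dual_ball. (\<Sum>j<k. \<bar>\<phi> (x j)\<bar> powr p)) powr (1 / p)"

definition wpow :: "real \<Rightarrow> (nat \<Rightarrow> 'a::real_normed_vector) \<Rightarrow> nat set \<Rightarrow> ennreal" where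
  "wpow p x J = (SUP \<phi>\<in>dual_ball. (\<Sum>j. ennreal (if j \<in> J then \<bar>\<phi> (x j)\<bar> powr p else 0)))"

definition unconditionally_p_summable :: "real \<Rightarrow> (nat \<Rightarrow> 'a::real_normed_vector) \<Rightarrow> bool" where
  "unconditionally_p_summable p x \<longleftrightarrow>
     wpow p x UNIV < \<infinity> \<and> (\<lambda>m. wpow p x {m..}) \<longlonglongrightarrow> 0"

text \<open>Partial Rademacher sums sum_{j=1}^n r_j(t) y_j (sequence indexed from 0, paired with r_{j+1}).\<close>
definition rad_partial :: "(nat \<Rightarrow> 'b::real_normed_vector) \<Rightarrow> nat \<Rightarrow> real \<Rightarrow> 'b" where
  "rad_partial y n t = (\<Sum>j<n. rademacher (Suc j) t *\<^sub>R y j)"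

text \<open>Convergence of the Rademacher series in L_2([0,1],F).\<close>
definition almost_unconditionally_summable :: "(nat \<Rightarrow> 'b::real_normed_vector) \<Rightarrow> bool" where
  "almost_unconditionally_summable y \<longleftrightarrow>
     (\<exists>g. g \<in> borel_measurable (lebesgue_on {0..1}) \<and>
          (\<lambda>n. \<integral>\<^sup>+ t. ennreal ((norm (rad_partial y n t - g t))\<^sup>2) \<partial>(lebesgue_on {0..1}))
            \<longlonglongrightarrow> 0)"

definition almost_p_summing_at ::
  "real \<Rightarrow> ('a::real_normed_vector \<Rightarrow> 'b::real_normed_vector) \<Rightarrow> 'a \<Rightarrow> bool" where
  "almost_p_summing_at p f a \<longleftrightarrow>
     (\<exists>C \<epsilon> r. C > 0 \<and> \<epsilon> > 0 \<and> r > 0 \<and>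
        (\<forall>k x. wnorm_fin p x k < \<epsilon> \<longrightarrow>
           sqrt (integral\<^sup>L (lebesgue_on {0..1})
              (\<lambda>t. (norm (\<Sum>j<k. rademacher (Suc j) t *\<^sub>R (f (a + x j) - f a)))\<^sup>2))
           \<le> C * wnorm_fin p x k powr r))"

end

theory Submission
  imports Defs
begin

lemma borel_measurable_pointwise_limit_metric:
  fixes f :: "nat \<Rightarrow> 'a \<Rightarrow> 'b::metric_space"
  assumes f: "\<And>k. f k \<in> borel_measurable M"
    and lim: "\<And>t. t \<in> space M \<Longrightarrow> (\<lambda>k. f k t) \<longlonglongrightarrow> g t"
  shows "g \<in> borel_measurable M"
proof (rule borel_measurableI)
  fix U :: "'b set" assume U: "open U"
  show "g -` U \<inter> space M \<in> sets M"
  proof (cases "U = UNIV")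
    case True then show ?thesis by simp
  next
    case False
    define V where "V m = {y. 1 / real (Suc m) < infdist y (-U)}" for m :: nat
    have Vo: "open (V m)" for m
      unfolding V_def by (intro open_Collect_less continuous_intros continuous_on_infdist)
    have Vs[measurable]: "V m \<in> sets borel" for m using Vo[of m] by simp
    have cl: "closed (-U)" "-U \<noteq> {}" using U False by auto
    have eq: "g -` U \<inter> space M = {t \<in> space M. \<exists>m. \<exists>N. \<forall>k. N \<le> k \<longrightarrow> f k t \<in> V m}"
    proof (intro set_eqI iffI)
      fix t assume t: "t \<in> g -` U \<inter> space M"
      then have "g t \<notin> -U" by auto
      then have d: "0 < infdist (g t) (-U)"
        using in_closed_iff_infdist_zero[OF cl, of "g t"] infdist_nonneg[of "g t" "-U"] by linarith
      obtain m where m: "inverse (real (Suc m)) < infdist (g t) (-U)"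
        using reals_Archimedean[OF d] by blast
      have "(\<lambda>k. infdist (f k t) (-U)) \<longlonglongrightarrow> infdist (g t) (-U)"
        using lim t by (intro tendsto_infdist) auto
      from order_tendstoD(1)[OF this m] obtain N where "\<forall>k\<ge>N. inverse (real (Suc m)) < infdist (f k t) (-U)"
        unfolding eventually_sequentially by blast
      then show "t \<in> {t \<in> space M. \<exists>m. \<exists>N. \<forall>k. N \<le> k \<longrightarrow> f k t \<in> V m}"
        using t by (auto simp: V_def field_simps)
    next
      fix t assume "t \<in> {t \<in> space M. \<exists>m. \<exists>N. \<forall>k. N \<le> k \<longrightarrow> f k t \<in> V m}"
      then obtain m N where t: "t \<in> space M" and mN: "\<forall>k\<ge>N. 1 / real (Suc m) < infdist (f k t) (-U)"
        by (auto simp: V_def)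
      have "(\<lambda>k. infdist (f k t) (-U)) \<longlonglongrightarrow> infdist (g t) (-U)"
        using lim t by (intro tendsto_infdist) auto
      then have "1 / real (Suc m) \<le> infdist (g t) (-U)"
        by (rule Lim_bounded2[where N=N]) (use mN in \<open>auto intro: less_imp_le\<close>)
      moreover have "0 < 1 / real (Suc m)" by simp
      ultimately have "g t \<notin> -U" by (metis infdist_zero not_less order.strict_trans2 order_refl)
      then show "t \<in> g -` U \<inter> space M" using t by auto
    qed
    show ?thesis unfolding eq using f by measurable
  qed
qed

lemma L2_complete:
  fixes S :: "nat \<Rightarrow> 'a \<Rightarrow> 'b::banach" and B :: "nat \<Rightarrow> real"
  assumes Sm: "\<And>n. S n \<in> borel_measurable M"
    and Dm: "\<And>n m. (\<lambda>t. norm (S n t - S m t)) \<in> borel_measurable M"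
    and bnd: "\<And>m n. M0 \<le> m \<Longrightarrow> m \<le> n \<Longrightarrow>
        (\<integral>\<^sup>+t. ennreal ((norm (S n t - S m t))\<^sup>2) \<partial>M) \<le> ennreal (B m)"
    and B0: "B \<longlonglongrightarrow> 0"
  shows "\<exists>g. g \<in> borel_measurable M \<and>
     (\<lambda>n. \<integral>\<^sup>+t. ennreal ((norm (S n t - g t))\<^sup>2) \<partial>M) \<longlonglongrightarrow> 0"
proof -
  have "\<exists>N. M0 \<le> N \<and> (\<forall>m\<ge>N. B m \<le> (1/4)^k)" for k
  proof -
    have "(0::real) < (1/4)^k" by simp
    from order_tendstoD(2)[OF B0 this] obtain N0 where "\<forall>m\<ge>N0. B m < (1/4)^k"
      unfolding eventually_sequentially by blast
    then show ?thesis by (intro exI[of _ "max M0 N0"]) auto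
  qed
  then obtain N where N1: "\<And>k. M0 \<le> N k" and N2: "\<And>k m. N k \<le> m \<Longrightarrow> B m \<le> (1/4)^k"
    by metis
  define n where "n k = k + (\<Sum>i\<le>k. N i)" for k
  have n_ge: "N k \<le> n k" for k
    unfolding n_def using member_le_sum[of k "{..k}" N] by simp
  have n_ge2: "k \<le> n k" for k unfolding n_def by simp
  have n_mono: "n k \<le> n (Suc k)" for k unfolding n_def by simp
  define D where "D k t = norm (S (n (Suc k)) t - S (n k) t)" for k t
  have Dm'[measurable]: "D k \<in> borel_measurable M" for k unfolding D_def by (rule Dm)
  have Dint: "(\<integral>\<^sup>+t. ennreal ((D k t)\<^sup>2) \<partial>M) \<le> ennreal ((1/4)^k)" for k
  proof -
    have "(\<integral>\<^sup>+t. ennreal ((D k t)\<^sup>2) \<partial>M) \<le> ennreal (B (n k))"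
      unfolding D_def by (rule bnd) (use N1[of k] n_ge[of k] n_mono[of k] in auto)
    also have "\<dots> \<le> ennreal ((1/4)^k)" using N2[OF n_ge[of k]] by (rule ennreal_leI)
    finally show ?thesis .
  qed
  define \<Phi> where "\<Phi> t = (\<Sum>k. ennreal (2^k * (D k t)\<^sup>2))" for t
  have \<Phi>m[measurable]: "\<Phi> \<in> borel_measurable M" unfolding \<Phi>_def by measurable
  have "(\<integral>\<^sup>+t. \<Phi> t \<partial>M) = (\<Sum>k. \<integral>\<^sup>+t. ennreal (2^k * (D k t)\<^sup>2) \<partial>M)"
    unfolding \<Phi>_def by (rule nn_integral_suminf) measurable
  also have "\<dots> \<le> (\<Sum>k. ennreal ((1/2)^k))"
  proof (rule suminf_le)
    fix k
    have "(\<integral>\<^sup>+t. ennreal (2^k * (D k t)\<^sup>2) \<partial>M) = ennreal (2^k) * (\<integral>\<^sup>+t. ennreal ((D k t)\<^sup>2) \<partial>M)"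
      by (subst nn_integral_cmult[symmetric]) (auto simp: ennreal_mult)
    also have "\<dots> \<le> ennreal (2^k) * ennreal ((1/4)^k)"
      by (intro mult_left_mono Dint) auto
    also have "\<dots> = ennreal ((1/2)^k)"
      by (simp add: ennreal_mult[symmetric] power_mult_distrib[symmetric])
    finally show "(\<integral>\<^sup>+t. ennreal (2^k * (D k t)\<^sup>2) \<partial>M) \<le> ennreal ((1/2)^k)" .
  qed auto
  also have "\<dots> = ennreal (\<Sum>k. (1/2)^k)"
    by (intro suminf_ennreal2) auto
  finally have "(\<integral>\<^sup>+t. \<Phi> t \<partial>M) \<noteq> \<infinity>"
    by (metis ennreal_neq_top infinity_ennreal_def top_unique)
  then have AE\<Phi>: "AE t in M. \<Phi> t \<noteq> \<infinity>" by (intro nn_integral_PInf_AE) auto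
  define A where "A = {t \<in> space M. \<Phi> t \<noteq> \<infinity>}"
  have Asets[measurable]: "A \<in> sets M" unfolding A_def by measurable
  have AEA: "AE t in M. t \<in> A" using AE\<Phi> unfolding A_def by (auto elim!: eventually_mono)
  have conv: "convergent (\<lambda>k. S (n k) t)" if t: "t \<in> A" for t
  proof -
    define c where "c = enn2real (\<Phi> t)"
    have c0: "0 \<le> c" unfolding c_def by simp
    have Dle: "2^k * (D k t)\<^sup>2 \<le> c" for k
    proof -
      have "ennreal (2^k * (D k t)\<^sup>2) \<le> (\<Sum>i<Suc k. ennreal (2^i * (D i t)\<^sup>2))"
        by (rule member_le_sum[of k "{..<Suc k}" "\<lambda>i. ennreal (2^i * (D i t)\<^sup>2)"]) auto
      also have "\<dots> \<le> \<Phi> t" unfolding \<Phi>_def by (intro sum_le_suminf summableI) auto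
      finally have "ennreal (2^k * (D k t)\<^sup>2) \<le> \<Phi> t" .
      then have "enn2real (ennreal (2^k * (D k t)\<^sup>2)) \<le> c"
        unfolding c_def using t unfolding A_def by (intro enn2real_mono) (auto simp: top_unique less_top)
      then show ?thesis by simp
    qed
    have Dle2: "D k t \<le> sqrt c * sqrt (1/2) ^ k" for k
    proof -
      have "(D k t)\<^sup>2 \<le> c * (1/2)^k"
        using Dle[of k] by (simp add: field_simps)
      then have "sqrt ((D k t)\<^sup>2) \<le> sqrt (c * (1/2)^k)" by (rule real_sqrt_le_mono)
      then show ?thesis unfolding D_def by (simp add: real_sqrt_mult real_sqrt_power)
    qed
    have "summable (\<lambda>k. sqrt c * sqrt (1/2) ^ k)"
      by (intro summable_mult summable_geometric) auto
    then have "summable (\<lambda>k. norm (S (n (Suc k)) t - S (n k) t))"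
      by (rule summable_comparison_test[rotated]) (use Dle2 in \<open>auto simp: D_def\<close>)
    then have "summable (\<lambda>k. S (n (Suc k)) t - S (n k) t)" by (rule summable_norm_cancel)
    then have "(\<lambda>k. \<Sum>i<k. S (n (Suc i)) t - S (n i) t) \<longlonglongrightarrow> (\<Sum>i. S (n (Suc i)) t - S (n i) t)"
      by (rule summable_LIMSEQ)
    then have "(\<lambda>k. S (n 0) t + (\<Sum>i<k. S (n (Suc i)) t - S (n i) t)) \<longlonglongrightarrow> S (n 0) t + (\<Sum>i. S (n (Suc i)) t - S (n i) t)"
      by (intro tendsto_intros)
    moreover have "S (n 0) t + (\<Sum>i<k. S (n (Suc i)) t - S (n i) t) = S (n k) t" for k
      using sum_lessThan_telescope[of "\<lambda>i. S (n i) t" k] by simp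
    ultimately show ?thesis unfolding convergent_def by auto
  qed
  define F where "F k t = (if t \<in> A then S (n k) t else 0)" for k t
  define g where "g t = lim (\<lambda>k. F k t)" for t
  have Flim: "(\<lambda>k. F k t) \<longlonglongrightarrow> g t" for t
  proof (cases "t \<in> A")
    case True
    then show ?thesis unfolding g_def F_def using conv[OF True] by (simp add: convergent_LIMSEQ_iff)
  next
    case False
    then show ?thesis unfolding g_def F_def by (simp add: limI)
  qed
  have Fm: "F k \<in> borel_measurable M" for k
    unfolding F_def by (rule measurable_If_set) (auto simp: Sm)
  have gm: "g \<in> borel_measurable M"
    by (rule borel_measurable_pointwise_limit_metric[OF Fm Flim])
  have main: "(\<integral>\<^sup>+t. ennreal ((norm (S m t - g t))\<^sup>2) \<partial>M) \<le> ennreal (B m)" if m: "M0 \<le> m" for m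
  proof -
    have "(\<integral>\<^sup>+t. ennreal ((norm (S m t - g t))\<^sup>2) \<partial>M)
        = (\<integral>\<^sup>+t. liminf (\<lambda>k. ennreal ((norm (S m t - S (n k) t))\<^sup>2)) \<partial>M)"
    proof (rule nn_integral_cong_AE)
      show "AE t in M. ennreal ((norm (S m t - g t))\<^sup>2) = liminf (\<lambda>k. ennreal ((norm (S m t - S (n k) t))\<^sup>2))"
        using AEA
      proof (rule eventually_mono)
        fix t assume t: "t \<in> A"
        have "(\<lambda>k. S (n k) t) \<longlonglongrightarrow> g t" using Flim[of t] t unfolding F_def by simp
        then have "(\<lambda>k. ennreal ((norm (S m t - S (n k) t))\<^sup>2)) \<longlonglongrightarrow> ennreal ((norm (S m t - g t))\<^sup>2)"
          by (intro tendsto_intros)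
        then show "ennreal ((norm (S m t - g t))\<^sup>2) = liminf (\<lambda>k. ennreal ((norm (S m t - S (n k) t))\<^sup>2))"
          by (metis lim_imp_Liminf trivial_limit_sequentially)
      qed
    qed
    also have "\<dots> \<le> liminf (\<lambda>k. \<integral>\<^sup>+t. ennreal ((norm (S m t - S (n k) t))\<^sup>2) \<partial>M)"
      by (rule nn_integral_liminf) (use Dm in measurable)
    also have "\<dots> \<le> limsup (\<lambda>k. \<integral>\<^sup>+t. ennreal ((norm (S m t - S (n k) t))\<^sup>2) \<partial>M)"
      by (rule Liminf_le_Limsup) simp
    also have "\<dots> \<le> ennreal (B m)"
    proof (rule Limsup_bounded)
      show "\<forall>\<^sub>F k in sequentially. (\<integral>\<^sup>+t. ennreal ((norm (S m t - S (n k) t))\<^sup>2) \<partial>M) \<le> ennreal (B m)"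
        unfolding eventually_sequentially
      proof (intro exI allI impI)
        fix k assume "m \<le> k"
        then have "m \<le> n k" using n_ge2[of k] by linarith
        then show "(\<integral>\<^sup>+t. ennreal ((norm (S m t - S (n k) t))\<^sup>2) \<partial>M) \<le> ennreal (B m)"
          using bnd[OF m, of "n k"] by (simp add: norm_minus_commute)
      qed
    qed
    finally show ?thesis .
  qed
  have "(\<lambda>m. \<integral>\<^sup>+t. ennreal ((norm (S m t - g t))\<^sup>2) \<partial>M) \<longlonglongrightarrow> 0"
  proof (rule tendsto_sandwich[of "\<lambda>_. 0" _ _ "\<lambda>m. ennreal (B m)"])
    show "\<forall>\<^sub>F m in sequentially. (\<integral>\<^sup>+t. ennreal ((norm (S m t - g t))\<^sup>2) \<partial>M) \<le> ennreal (B m)"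
      unfolding eventually_sequentially using main by blast
    have "(\<lambda>m. ennreal (B m)) \<longlonglongrightarrow> ennreal 0" by (intro tendsto_ennrealI B0)
    then show "(\<lambda>m. ennreal (B m)) \<longlonglongrightarrow> 0" by simp
  qed auto
  then show ?thesis using gm by blast
qed

lemma rademacher_simple: "simple_function (lebesgue_on {0..1}) (rademacher j)"
proof (rule simple_function_borel_measurable)
  have "rademacher j \<in> borel_measurable borel" unfolding rademacher_def by measurable
  from measurable_compose[OF id_borel_measurable_lebesgue_on this]
  show "rademacher j \<in> borel_measurable (lebesgue_on {0..1})" by (simp add: id_def)
  have "rademacher j ` space (lebesgue_on {0..1}) \<subseteq> {-1, 0, 1}"
    by (auto simp: rademacher_def sgn_real_def)
  then show "finite (rademacher j ` space (lebesgue_on {0..1}))" by (rule finite_subset) auto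
qed

lemma rad_partial_simple: "simple_function (lebesgue_on {0..1}) (rad_partial y n)"
proof (induction n)
  case 0 then show ?case by (simp add: rad_partial_def)
next
  case (Suc n)
  have r: "simple_function (lebesgue_on {0..1}) (\<lambda>t. rademacher (Suc n) t *\<^sub>R y n)"
    using simple_function_compose1[OF rademacher_simple, of "\<lambda>r. r *\<^sub>R y n" "Suc n"] by simp
  have "simple_function (lebesgue_on {0..1}) (\<lambda>t. rad_partial y n t + rademacher (Suc n) t *\<^sub>R y n)"
    using simple_function_compose2[OF Suc r, of "(+)"] by simp
  then show ?case by (simp add: rad_partial_def)
qed

lemma rad_partial_bound: "norm (rad_partial y n t) \<le> (\<Sum>j<n. norm (y j))"
proof -
  have "norm (rad_partial y n t) \<le> (\<Sum>j<n. norm (rademacher (Suc j) t *\<^sub>R y j))"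
    unfolding rad_partial_def by (rule norm_sum)
  also have "\<dots> \<le> (\<Sum>j<n. norm (y j))"
  proof (rule sum_mono)
    fix j
    have "\<bar>rademacher (Suc j) t\<bar> \<le> 1" by (simp add: rademacher_def sgn_real_def)
    then show "norm (rademacher (Suc j) t *\<^sub>R y j) \<le> norm (y j)"
      by (simp add: mult_left_le_one_le)
  qed
  finally show ?thesis .
qed

lemma sum_if_split:
  fixes h :: "nat \<Rightarrow> 'b::ab_group_add"
  assumes "m \<le> n"
  shows "(\<Sum>j<n. (if m \<le> j then h j else 0)) = (\<Sum>j<n. h j) - (\<Sum>j<m. h j)"
  using assms
proof (induction n rule: dec_induct)
  case base then show ?case by simp
next
  case (step k) then show ?case by simp
qed

theorem mainTheorem4:
  fixes f :: "'a::banach \<Rightarrow> 'b::banach" and a :: 'a and p :: real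
  assumes "1 \<le> p"
    and "almost_p_summing_at p f a"
    and "unconditionally_p_summable p x"
  shows "almost_unconditionally_summable (\<lambda>j. f (a + x j) - f a)"
proof -
  define y where "y = (\<lambda>j. f (a + x j) - f a)"
  obtain C \<epsilon> r where C: "C > 0" "\<epsilon> > 0" "r > 0" and
    H: "\<And>k xx. wnorm_fin p xx k < \<epsilon> \<Longrightarrow>
           sqrt (integral\<^sup>L (lebesgue_on {0..1})
              (\<lambda>t. (norm (\<Sum>j<k. rademacher (Suc j) t *\<^sub>R (f (a + xx j) - f a)))\<^sup>2))
           \<le> C * wnorm_fin p xx k powr r"
    using assms(2) unfolding almost_p_summing_at_def by blast
  have p0: "0 < p" using assms(1) by simp
  have W: "(\<lambda>m. wpow p x {m..}) \<longlonglongrightarrow> 0"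
    using assms(3) unfolding unconditionally_p_summable_def by blast
  define V where "V m = enn2real (wpow p x {m..})" for m
  have W': "(\<lambda>m. wpow p x {m..}) \<longlonglongrightarrow> ennreal 0" using W by simp
  have V0: "V \<longlonglongrightarrow> 0" unfolding V_def using tendsto_enn2real[OF W'] by simp
  have Vnn: "0 \<le> V m" for m by (simp add: V_def)
  have VP: "(\<lambda>m. V m powr (1/p)) \<longlonglongrightarrow> 0"
    by (rule tendsto_zero_powrI[OF V0 tendsto_const]) (use p0 Vnn in auto)
  define B where "B m = (C * (V m powr (1/p)) powr r)\<^sup>2" for m
  have B0: "B \<longlonglongrightarrow> 0"
  proof -
    have "(\<lambda>m. (V m powr (1/p)) powr r) \<longlonglongrightarrow> 0"
      by (rule tendsto_zero_powrI[OF VP tendsto_const]) (use C in auto)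
    then have "(\<lambda>m. (C * (V m powr (1/p)) powr r)\<^sup>2) \<longlonglongrightarrow> (C * 0)\<^sup>2"
      by (intro tendsto_intros)
    then show ?thesis unfolding B_def[abs_def] by (simp only: mult_zero_right power_zero_numeral)
  qed
  obtain M0 where M0: "\<And>m. M0 \<le> m \<Longrightarrow> V m powr (1/p) < \<epsilon> \<and> wpow p x {m..} < \<infinity>"
  proof -
    have "eventually (\<lambda>m. V m powr (1/p) < \<epsilon>) sequentially"
      by (rule order_tendstoD(2)[OF VP C(2)])
    moreover have "eventually (\<lambda>m. wpow p x {m..} < \<infinity>) sequentially"
      by (rule order_tendstoD(2)[OF W]) simp
    ultimately have "eventually (\<lambda>m. V m powr (1/p) < \<epsilon> \<and> wpow p x {m..} < \<infinity>) sequentially"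
      by eventually_elim auto
    then show ?thesis using that unfolding eventually_sequentially by blast
  qed
  have fin: "finite_measure (lebesgue_on {0..1::real})"
    by (rule finite_measure_lebesgue_on) simp
  have s1: "simple_function (lebesgue_on {0..1}) (\<lambda>t. rad_partial y n t - rad_partial y m t)" for n m
    using simple_function_compose2[OF rad_partial_simple rad_partial_simple, of "\<lambda>u w. u - w" y n y m]
    by simp
  have Dm: "(\<lambda>t. norm (rad_partial y n t - rad_partial y m t)) \<in> borel_measurable (lebesgue_on {0..1})" for n m
    using borel_measurable_simple_function[OF simple_function_compose1[OF s1[of n m], of norm]] .
  have bnd: "(\<integral>\<^sup>+t. ennreal ((norm (rad_partial y n t - rad_partial y m t))\<^sup>2) \<partial>lebesgue_on {0..1})
      \<le> ennreal (B m)" if m: "M0 \<le> m" and mn: "m \<le> n" for m n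
  proof -
    define x' where "x' j = (if m \<le> j then x j else 0)" for j
    have wfin: "wpow p x {m..} < \<infinity>" and V\<epsilon>: "V m powr (1/p) < \<epsilon>" using M0[OF m] by auto
    have sumle: "(\<Sum>j<n. \<bar>\<phi> (x' j)\<bar> powr p) \<le> V m" if \<phi>: "\<phi> \<in> dual_ball" for \<phi>
    proof -
      have \<phi>0: "\<phi> 0 = 0" using \<phi> unfolding dual_ball_def by (auto simp: linear_simps)
      have eq: "(\<Sum>j<n. \<bar>\<phi> (x' j)\<bar> powr p) = (\<Sum>j<n. (if j \<in> {m..} then \<bar>\<phi> (x j)\<bar> powr p else 0))"
        by (rule sum.cong) (auto simp: x'_def \<phi>0)
      have "ennreal (\<Sum>j<n. \<bar>\<phi> (x' j)\<bar> powr p) = (\<Sum>j<n. ennreal (if j \<in> {m..} then \<bar>\<phi> (x j)\<bar> powr p else 0))"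
        unfolding eq by (rule sum_ennreal[symmetric]) auto
      also have "\<dots> \<le> (\<Sum>j. ennreal (if j \<in> {m..} then \<bar>\<phi> (x j)\<bar> powr p else 0))"
        by (intro sum_le_suminf summableI) auto
      also have "\<dots> \<le> wpow p x {m..}" unfolding wpow_def using \<phi> by (rule SUP_upper)
      finally have "ennreal (\<Sum>j<n. \<bar>\<phi> (x' j)\<bar> powr p) \<le> wpow p x {m..}" .
      then have "enn2real (ennreal (\<Sum>j<n. \<bar>\<phi> (x' j)\<bar> powr p)) \<le> V m"
        unfolding V_def using wfin by (intro enn2real_mono) auto
      then show ?thesis by (simp add: sum_nonneg)
    qed
    have db_ne: "(\<lambda>_. 0) \<in> (dual_ball :: ('a \<Rightarrow> real) set)" by (simp add: dual_ball_def onorm_zero)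
    have bdd: "bdd_above ((\<lambda>\<phi>. \<Sum>j<n. \<bar>\<phi> (x' j)\<bar> powr p) ` dual_ball)"
      using sumle by (intro bdd_aboveI2) auto
    have SUPle: "(SUP \<phi>\<in>dual_ball. \<Sum>j<n. \<bar>\<phi> (x' j)\<bar> powr p) \<le> V m"
      by (rule cSUP_least) (use db_ne sumle in auto)
    have SUPge: "0 \<le> (SUP \<phi>\<in>dual_ball. \<Sum>j<n. \<bar>\<phi> (x' j)\<bar> powr p)"
      using cSUP_upper[OF db_ne bdd] by simp
    have wle: "wnorm_fin p x' n \<le> V m powr (1/p)"
      unfolding wnorm_fin_def by (rule powr_mono2) (use SUPge SUPle p0 in auto)
    have w0: "0 \<le> wnorm_fin p x' n" unfolding wnorm_fin_def by simp
    have w\<epsilon>: "wnorm_fin p x' n < \<epsilon>" using wle V\<epsilon> by linarith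
    have sumeq: "(\<Sum>j<n. rademacher (Suc j) t *\<^sub>R (f (a + x' j) - f a)) = rad_partial y n t - rad_partial y m t" for t
    proof -
      have "(\<Sum>j<n. rademacher (Suc j) t *\<^sub>R (f (a + x' j) - f a))
          = (\<Sum>j<n. if m \<le> j then rademacher (Suc j) t *\<^sub>R y j else 0)"
        by (rule sum.cong) (auto simp: x'_def y_def)
      also have "\<dots> = rad_partial y n t - rad_partial y m t"
        unfolding rad_partial_def by (rule sum_if_split[OF mn])
      finally show ?thesis .
    qed
    define I where "I = integral\<^sup>L (lebesgue_on {0..1}) (\<lambda>t. (norm (rad_partial y n t - rad_partial y m t))\<^sup>2)"
    have HI: "sqrt I \<le> C * wnorm_fin p x' n powr r" using H[OF w\<epsilon>] unfolding I_def sumeq .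
    have integ: "integrable (lebesgue_on {0..1}) (\<lambda>t. (norm (rad_partial y n t - rad_partial y m t))\<^sup>2)"
    proof (rule finite_measure.integrable_const_bound[OF fin, where B="((\<Sum>j<n. norm (y j)) + (\<Sum>j<m. norm (y j)))\<^sup>2"])
      show "AE t in lebesgue_on {0..1}. norm ((norm (rad_partial y n t - rad_partial y m t))\<^sup>2)
          \<le> ((\<Sum>j<n. norm (y j)) + (\<Sum>j<m. norm (y j)))\<^sup>2"
      proof (rule AE_I2)
        fix t
        have "norm (rad_partial y n t - rad_partial y m t) \<le> norm (rad_partial y n t) + norm (rad_partial y m t)"
          by (rule norm_triangle_ineq4)
        also have "\<dots> \<le> (\<Sum>j<n. norm (y j)) + (\<Sum>j<m. norm (y j))"
          by (intro add_mono rad_partial_bound)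
        finally show "norm ((norm (rad_partial y n t - rad_partial y m t))\<^sup>2)
          \<le> ((\<Sum>j<n. norm (y j)) + (\<Sum>j<m. norm (y j)))\<^sup>2"
          by (simp add: power_mono)
      qed
      show "(\<lambda>t. (norm (rad_partial y n t - rad_partial y m t))\<^sup>2) \<in> borel_measurable (lebesgue_on {0..1})"
        using Dm[of n m] by measurable
    qed
    have nneq: "(\<integral>\<^sup>+t. ennreal ((norm (rad_partial y n t - rad_partial y m t))\<^sup>2) \<partial>lebesgue_on {0..1}) = ennreal I"
      unfolding I_def by (rule nn_integral_eq_integral[OF integ]) auto
    have I0: "0 \<le> I" unfolding I_def by (rule integral_nonneg_AE) auto
    have "I = (sqrt I)\<^sup>2" using I0 by simp
    also have "\<dots> \<le> (C * wnorm_fin p x' n powr r)\<^sup>2"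
      by (rule power_mono[OF HI]) (use I0 in simp)
    also have "\<dots> \<le> B m"
      unfolding B_def by (intro power_mono mult_left_mono powr_mono2) (use w0 wle C in auto)
    finally have "I \<le> B m" .
    then show ?thesis unfolding nneq by (rule ennreal_leI)
  qed
  have Sm: "rad_partial y n \<in> borel_measurable (lebesgue_on {0..1})" for n
    by (rule borel_measurable_simple_function[OF rad_partial_simple])
  obtain g where "g \<in> borel_measurable (lebesgue_on {0..1})"
    "(\<lambda>n. \<integral>\<^sup>+t. ennreal ((norm (rad_partial y n t - g t))\<^sup>2) \<partial>lebesgue_on {0..1}) \<longlonglongrightarrow> 0"
    using L2_complete[where S="rad_partial y" and M="lebesgue_on {0..1}", OF Sm Dm bnd B0] by blast
  then show ?thesis unfolding almost_unconditionally_summable_def y_def[symmetric] by blast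
qed

end
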